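(* Let $p$ be an odd prime, $n=2k$, and $\mathcal{S}=\{y\in\mathbb{F}_{p^n}: T^n_k(y)=0\}$. Let $L(x)=\sum_{j=0}^{n-1}c_jx^{p^j}$ with all $c_j\in\mathbb{F}_{p^k}$ be a linearized polynomial that permutes $\mathbb{F}_{p^n}$, let $\delta\in\mathbb{F}_{p^n}$ be arbitrary, let $t$ be a nonnegative integer and $s=t(p^k+1)$. Then the mapping $$G(x)=-L(x)+(x+\delta)^s-(x+\delta)^{p^ks}$$ permutes $\mathcal{S}$, and consequently $$F(x)=L(x)+(x^{p^k}-x+\delta)^{t(p^k+1)}$$ is a permutation of $\mathbb{F}_{p^n}$.
   Context: $T^n_k(\beta)=\beta+\beta^{p^k}$ for $n=2k$ is the relative trace from $\mathbb{F}_{p^n}$ to $\mathbb{F}_{p^k}$. The convention $y^0=1$ is used. *)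

theory Defs
  imports "HOL-Computational_Algebra.Primes"
begin

definition rel_trace :: "nat \<Rightarrow> nat \<Rightarrow> 'a::field \<Rightarrow> 'a" where
  "rel_trace p k \<beta> = \<beta> + \<beta> ^ (p ^ k)"

definition subfield_pk :: "nat \<Rightarrow> nat \<Rightarrow> 'a::field set" where
  "subfield_pk p k = {y. y ^ (p ^ k) = y}"

end

theory Submission
  imports Defs
begin

lemma fin_power_card:
  fixes x :: "'a :: {field,finite}"
  shows "x ^ card (UNIV :: 'a set) = x"
proof (cases "x = 0")
  case False
  have "x * (\<Prod>y\<in>UNIV-{0}. x * y) = x * x ^ (card (UNIV :: 'a set) - 1) * \<Prod>(UNIV-{0})"
    by (simp add: prod.distrib mult_ac)
  also have "x * x ^ (card (UNIV :: 'a set) - 1) = x ^ Suc (card (UNIV :: 'a set) - 1)"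
    by (subst power_Suc) auto
  also have "Suc (card (UNIV :: 'a set) - 1) = card (UNIV :: 'a set)"
    using finite_UNIV_card_ge_0[where ?'a = 'a] by simp
  also have "(\<Prod>y\<in>UNIV-{0}. x * y) = (\<Prod>y\<in>UNIV-{0}. y)"
    by (rule prod.reindex_bij_witness[of _ "\<lambda>y. y / x" "\<lambda>y. x * y"]) (use False in auto)
  finally show ?thesis
    by simp
qed (use finite_UNIV_card_ge_0[where ?'a = 'a] in auto)

theorem proposition7:
  fixes p n k t s :: nat
    and c :: "nat \<Rightarrow> 'a::{field,finite}"
    and L :: "'a \<Rightarrow> 'a"
    and \<delta> :: 'a
  assumes "prime p" and "odd p"
    and "CHAR('a) = p" and "card (UNIV :: 'a set) = p ^ n"
    and "n = 2 * k"
    and "\<forall>j<n. c j \<in> subfield_pk p k"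
    and "L = (\<lambda>x. \<Sum>j<n. c j * x ^ (p ^ j))"
    and "bij L"
    and "s = t * (p ^ k + 1)"
  shows "bij_betw (\<lambda>x. - L x + (x + \<delta>) ^ s - (x + \<delta>) ^ (p ^ k * s))
           {y. rel_trace p k y = 0} {y. rel_trace p k y = 0}
         \<and> bij (\<lambda>x. L x + (x ^ (p ^ k) - x + \<delta>) ^ (t * (p ^ k + 1)))"
proof -
  define q where "q = p ^ k"
  have pc: "prime CHAR('a)" using assms by simp
  have add: "(x + y) ^ (p ^ j) = x ^ (p ^ j) + y ^ (p ^ j)" for x y :: 'a and j
    using freshmans_dream'[OF pc, of "p ^ j" j x y] assms(3) by simp
  have neg: "(- x) ^ (p ^ j) = - (x ^ (p ^ j))" for x :: 'a and j
  proof -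
    have "0 = (x + - x) ^ (p ^ j)" using assms(1) by (simp add: power_0_left prime_gt_0_nat)
    also have "\<dots> = x ^ (p ^ j) + (- x) ^ (p ^ j)" by (rule add)
    finally show ?thesis by (simp add: eq_neg_iff_add_eq_0 add.commute)
  qed
  have sub: "(x - y) ^ (p ^ j) = x ^ (p ^ j) - y ^ (p ^ j)" for x y :: 'a and j
    using add[of x "- y" j] neg[of y j] by simp
  have qq: "q * q = p ^ n" unfolding q_def assms(5) by (simp add: power_add[symmetric] mult_2)
  have invol: "(x ^ q) ^ q = x" for x :: 'a
    by (metis fin_power_card assms(4) qq power_mult)
  have cfix: "c j ^ q = c j" if "j < n" for j
    using assms(6) that unfolding subfield_pk_def q_def by auto
  have Ladd: "L (x + y) = L x + L y" for x y
    unfolding assms(7) by (simp add: add distrib_left sum.distrib)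
  have L0: "L 0 = 0"
    unfolding assms(7) using assms(1) by (simp add: power_0_left prime_gt_0_nat)
  have Lneg: "L (- x) = - L x" for x
    using Ladd[of x "- x"] L0 by (simp add: eq_neg_iff_add_eq_0 add.commute)
  have Lsub: "L (x - y) = L x - L y" for x y
    using Ladd[of x "- y"] Lneg[of y] by simp
  have Lcomm: "(L x) ^ q = L (x ^ q)" for x
  proof -
    have "(L x) ^ q = (\<Sum>j<n. (c j * x ^ (p ^ j)) ^ q)"
      unfolding assms(7) q_def by (rule freshmans_dream_sum'[OF pc]) (simp add: assms(3))
    also have "\<dots> = (\<Sum>j<n. c j * (x ^ q) ^ (p ^ j))"
    proof (rule sum.cong)
      fix j assume "j \<in> {..<n}"
      then show "(c j * x ^ (p ^ j)) ^ q = c j * (x ^ q) ^ (p ^ j)"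
        using cfix[of j] by (simp add: power_mult_distrib power_mult[symmetric] mult.commute)
    qed simp
    finally show ?thesis unfolding assms(7) by simp
  qed
  have Nfix: "((z::'a) ^ s) ^ q = z ^ s" for z
  proof -
    have "(z ^ s) ^ q = z ^ (t * (q * q) + t * q)"
      unfolding assms(9) q_def[symmetric] by (simp add: power_mult[symmetric] algebra_simps)
    also have "\<dots> = ((z ^ (q * q)) ^ t) * z ^ (t * q)"
      by (simp add: power_add power_mult[symmetric] mult.commute)
    also have "z ^ (q * q) = z" by (simp add: power_mult invol)
    finally show ?thesis unfolding assms(9) q_def[symmetric]
      by (simp add: power_add algebra_simps)
  qed
  have injL: "inj L" using assms(8) bij_is_inj by blast
  let ?S = "{y. rel_trace p k y = 0}"
  have G: "- L x + (x + \<delta>) ^ s - (x + \<delta>) ^ (p ^ k * s) = - L x" for x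
    using Nfix[of "x + \<delta>"] by (simp add: q_def power_mult mult.commute)
  have maps: "(\<lambda>x. - L x) ` ?S \<subseteq> ?S"
  proof
    fix y assume "y \<in> (\<lambda>x. - L x) ` ?S"
    then obtain x where x: "rel_trace p k x = 0" "y = - L x" by auto
    have "rel_trace p k y = - L x + - (L (x ^ q))"
      using x(2) neg[of "L x" k] Lcomm[of x] unfolding rel_trace_def q_def by simp
    also have "\<dots> = - L (x + x ^ q)" by (simp add: Ladd)
    also have "x + x ^ q = 0" using x(1) unfolding rel_trace_def q_def by simp
    finally show "y \<in> ?S" using L0 by simp
  qed
  have injn: "inj_on (\<lambda>x. - L x) ?S" using injL by (auto simp: inj_on_def)
  have P1: "bij_betw (\<lambda>x. - L x) ?S ?S"
    unfolding bij_betw_def using injn endo_inj_surj[OF finite maps injn] by simp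
  define F where "F = (\<lambda>x. L x + (x ^ (p ^ k) - x + \<delta>) ^ (t * (p ^ k + 1)))"
  have Fs: "F x ^ q - F x = L (x ^ q - x)" for x
  proof -
    have "F x ^ q = L x ^ q + ((x ^ q - x + \<delta>) ^ s) ^ q"
      unfolding F_def q_def assms(9) by (rule add)
    then have "F x ^ q = L (x ^ q) + (x ^ q - x + \<delta>) ^ s" by (simp add: Nfix Lcomm)
    then show ?thesis unfolding F_def by (simp add: Lsub q_def assms(9))
  qed
  have "inj F"
  proof (rule injI)
    fix x y assume e: "F x = F y"
    then have "L (x ^ q - x) = L (y ^ q - y)" using Fs by metis
    then have e2: "x ^ q - x = y ^ q - y" using injL by (simp add: inj_eq)
    then have "L x = L y" using e unfolding F_def q_def by simp
    then show "x = y" using injL by (simp add: inj_eq)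
  qed
  then have "bij F" using finite_UNIV_inj_surj[OF finite_UNIV] by (simp add: bij_def)
  moreover have "bij_betw (\<lambda>x. - L x + (x + \<delta>) ^ s - (x + \<delta>) ^ (p ^ k * s)) ?S ?S"
    using P1 by (subst bij_betw_cong[where g="\<lambda>x. - L x"]) (simp_all only: G)
  ultimately show ?thesis unfolding F_def by blast
qed

end
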